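(* Let $p$ be a prime, let $n\geq 1$ and $k\geq 1$ be integers, and let $q$ be an integer with $\gcd(q,p)=1$. Let $\Gamma_{p,n,q}$ be the directed graph whose vertex set is $\mathbb{Z}_{p^n}=\{0,1,\dots,p^n-1\}$ and whose edge set is $$E=\{(x,\, q^y \bmod p^n)\;:\; x\in\mathbb{Z}_{p^n},\ y\in\mathbb{Z}_{\geq 0},\ y\equiv x \pmod{p^n}\}.$$ Let $C_{p,n,q}(k)$ be the number of $k$-cycles with marked initial vertex in $\Gamma_{p,n,q}$, i.e. the number of sequences $(x_0,x_1,\dots,x_{k-1})$ of vertices such that $(x_i,x_{i+1})\in E$ for $0\leq i\leq k-2$ and $(x_{k-1},x_0)\in E$ (equivalently, $C_{p,n,q}(k)=\mathrm{trace}(A^k)$ where $A$ is the adjacency matrix of $\Gamma_{p,n,q}$). Then $C_{p,n,q}(k)\leq (p-1)^k$. Moreover, if $q$ is a primitive root modulo $p$, then $C_{p,n,q}(k)=(p-1)^k$.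
   Context: Here $q^y \bmod p^n$ denotes the representative of $q^y$ modulo $p^n$ in $\{0,1,\dots,p^n-1\}$. A $k$-cycle with marked initial vertex is counted as a closed walk of length $k$ (vertices may repeat, loops are allowed). *)

theory Defs
  imports "HOL-Number_Theory.Number_Theory"
begin

definition gamma_vertices :: "nat \<Rightarrow> nat \<Rightarrow> int set" where
  "gamma_vertices p n = {0..<int p ^ n}"

definition gamma_edge :: "nat \<Rightarrow> nat \<Rightarrow> int \<Rightarrow> int \<Rightarrow> int \<Rightarrow> bool" where
  "gamma_edge p n q x z \<longleftrightarrow>
     x \<in> gamma_vertices p n \<and>
     (\<exists>y::nat. [int y = x] (mod (int p ^ n)) \<and> z = q ^ y mod (int p ^ n))"

definition gamma_cycles :: "nat \<Rightarrow> nat \<Rightarrow> int \<Rightarrow> nat \<Rightarrow> nat" where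
  "gamma_cycles p n q k = card {xs :: int list. length xs = k \<and> set xs \<subseteq> gamma_vertices p n \<and>
       (\<forall>i<k. gamma_edge p n q (xs ! i) (xs ! ((i + 1) mod k)))}"

end

theory Submission
  imports Defs
begin


lemma fermat_int:
  assumes p: "prime p"
  shows "[(a::int) ^ p = a] (mod int p)"
proof (cases "int p dvd a")
  case True
  have "p > 0" using p prime_gt_0_nat by blast
  have "a ^ p = a * a ^ (p - 1)" using \<open>p > 0\<close> by (cases p) auto
  then have "int p dvd a ^ p" using True by (metis dvd_mult2)
  then show ?thesis using True unfolding cong_iff_dvd_diff by (rule dvd_diff)
next
  case False
  define b where "b = nat (a mod int p)"
  have pp: "p > 1" using p prime_gt_1_nat by blast
  have ab: "int b = a mod int p" using pp by (simp add: b_def)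
  have "\<not> p dvd b"
  proof
    assume "p dvd b"
    then have "int p dvd a mod int p" using ab by (metis int_dvd_int_iff)
    then show False using False by (simp add: dvd_mod_iff)
  qed
  then have "[b ^ (p - 1) = 1] (mod p)" using fermat_theorem p by blast
  then have "[b * b ^ (p - 1) = b * 1] (mod p)" by (rule cong_scalar_left)
  moreover have "b ^ p = b * b ^ (p - 1)" using pp by (cases p) auto
  ultimately have "[b ^ p = b] (mod p)" by simp
  then have "[int (b ^ p) = int b] (mod int p)" by (simp only: cong_int_iff)
  then have c1: "[int b ^ p = int b] (mod int p)" by simp
  have c2: "[int b = a] (mod int p)" using ab by (simp add: cong_def)
  have "[a ^ p = int b ^ p] (mod int p)" using c2 by (simp add: cong_pow cong_sym)
  then show ?thesis using c1 c2 by (meson cong_trans)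
qed

lemma fermat_pow:
  assumes p: "prime p"
  shows "[(a::int) ^ (p ^ b) = a] (mod int p)"
proof (induction b)
  case 0 then show ?case by simp
next
  case (Suc b)
  have "a ^ (p ^ Suc b) = (a ^ p) ^ (p ^ b)" by (simp add: power_mult[symmetric] mult.commute)
  moreover have "[(a ^ p) ^ (p ^ b) = a ^ (p ^ b)] (mod int p)"
    using fermat_int[OF p] cong_pow by blast
  ultimately have "[a ^ (p ^ Suc b) = a ^ (p ^ b)] (mod int p)" by simp
  then show ?case using Suc.IH by (rule cong_trans)
qed

lemma lift1:
  assumes p: "prime p" and j: "j \<ge> 1" and u: "[(u::int) = 1] (mod int p ^ j)"
  shows "[u ^ p = 1] (mod int p ^ Suc j)"
proof -
  have "int p dvd int p ^ j" using j by (simp add: dvd_power)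
  then have u1: "[u = 1] (mod int p)" using u cong_dvd_modulus by blast
  have "[(\<Sum>i<p. u ^ i) = (\<Sum>i<p. 1 ^ i)] (mod int p)"
    by (intro cong_sum cong_pow u1)
  then have "int p dvd (\<Sum>i<p. u ^ i)" by (simp add: cong_0_iff[symmetric] cong_def)
  moreover have "int p ^ j dvd u - 1" using u by (simp add: cong_iff_dvd_diff)
  ultimately have "int p ^ j * int p dvd (u - 1) * (\<Sum>i<p. u ^ i)" by (simp add: mult_dvd_mono)
  moreover have "u ^ p - 1 = (u - 1) * (\<Sum>i<p. u ^ i)" by (rule power_diff_1_eq)
  ultimately have "int p ^ Suc j dvd u ^ p - 1" by (simp only: power_Suc2)
  then show ?thesis by (simp add: cong_iff_dvd_diff)
qed

lemma lift:
  assumes p: "prime p" and u: "[(w::int) = 1] (mod int p)"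
  shows "[w ^ (p ^ b) = 1] (mod int p ^ Suc b)"
proof (induction b)
  case 0 then show ?case using u by simp
next
  case (Suc b)
  have "w ^ (p ^ Suc b) = (w ^ (p ^ b)) ^ p" by (simp add: power_mult[symmetric] mult.commute)
  then show ?case using lift1[OF p _ Suc] by simp
qed


lemma core:
  assumes p: "prime p" and q: "coprime q (int p)" and yy: "y \<le> y'"
    and c1: "[int y = int y'] (mod int p ^ b)" and c2: "[q ^ y = q ^ y'] (mod int p)"
  shows "[q ^ y = q ^ y'] (mod int p ^ Suc b)"
proof -
  define d where "d = y' - y"
  have "int p ^ b dvd int y' - int y" using c1 by (simp add: cong_iff_dvd_diff dvd_diff_commute)
  also have "int y' - int y = int d" using yy by (simp add: d_def)
  finally have "p ^ b dvd d" by (metis int_dvd_int_iff of_nat_power)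
  then obtain m where m: "d = p ^ b * m" by blast
  define w where "w = q ^ m"
  have yq: "q ^ y' = q ^ y * w ^ (p ^ b)"
  proof -
    have "y' = y + p ^ b * m" using yy m d_def by simp
    then show ?thesis by (simp add: w_def power_add power_mult[symmetric] mult.commute)
  qed
  have cq: "coprime (q ^ y) (int p)" using q by simp
  have "[q ^ y * 1 = q ^ y * w ^ (p ^ b)] (mod int p)" using c2 yq by simp
  then have "[1 = w ^ (p ^ b)] (mod int p)" using cong_mult_lcancel[OF cq] by blast
  moreover have "[w ^ (p ^ b) = w] (mod int p)" by (rule fermat_pow[OF p])
  ultimately have "[w = 1] (mod int p)" by (meson cong_sym cong_trans)
  then have "[w ^ (p ^ b) = 1] (mod int p ^ Suc b)" by (rule lift[OF p])
  then have "[q ^ y * w ^ (p ^ b) = q ^ y * 1] (mod int p ^ Suc b)" by (rule cong_scalar_left)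
  then show ?thesis using yq by (simp add: cong_sym)
qed

primrec walk :: "(nat \<Rightarrow> int \<Rightarrow> int) \<Rightarrow> int \<Rightarrow> nat \<Rightarrow> int" where
  "walk ph x 0 = x"
| "walk ph x (Suc i) = ph (Suc i) (walk ph x i)"

context
  fixes p n :: nat and q :: int
  assumes p: "prime p" and n: "n \<ge> 1" and q: "coprime q (int p)"
begin

lemma pn_pos: "int p ^ n > 0" using p prime_gt_0_nat by simp

lemma edge_target:
  assumes "gamma_edge p n q x z"
  shows "z \<in> gamma_vertices p n" "\<not> int p dvd z" "x \<in> gamma_vertices p n"
proof -
  obtain y :: nat where y: "[int y = x] (mod int p ^ n)" and z: "z = q ^ y mod int p ^ n"
    and x: "x \<in> gamma_vertices p n"
    using assms unfolding gamma_edge_def by blast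
  show "x \<in> gamma_vertices p n" by (rule x)
  show "z \<in> gamma_vertices p n" using pn_pos z by (simp add: gamma_vertices_def)
  have dv: "int p dvd int p ^ n" using n by (simp add: dvd_power)
  show "\<not> int p dvd z"
  proof
    assume "int p dvd z"
    then have "int p dvd z mod int p" by simp
    also have "z mod int p = q ^ y mod int p" using z mod_mod_cancel[OF dv] by simp
    finally have "int p dvd q ^ y" by (simp add: dvd_mod_iff)
    moreover have "coprime (q ^ y) (int p)" using q by simp
    ultimately have "is_unit (int p)" by (meson coprime_common_divisor dvd_refl)
    then show False using p prime_gt_1_nat by simp
  qed
qed

lemma edge_cong:
  assumes "gamma_edge p n q x z"
  obtains y :: nat where "[int y = x] (mod int p ^ n)" "[z = q ^ y] (mod int p ^ n)" "z = q ^ y mod int p ^ n"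
  using assms unfolding gamma_edge_def by (auto simp: cong_def)

lemma contract:
  assumes b: "b < n" and e1: "gamma_edge p n q x z" and e2: "gamma_edge p n q x' z'"
    and cz: "[z = z'] (mod int p)" and cx: "[x = x'] (mod int p ^ b)"
  shows "[z = z'] (mod int p ^ Suc b)"
proof -
  obtain y where y1: "[int y = x] (mod int p ^ n)" and y2: "[z = q ^ y] (mod int p ^ n)"
    using e1 edge_cong by metis
  obtain y' where y1': "[int y' = x'] (mod int p ^ n)" and y2': "[z' = q ^ y'] (mod int p ^ n)"
    using e2 edge_cong by metis
  have d1: "int p ^ b dvd int p ^ n" using b by (simp add: le_imp_power_dvd)
  have d2: "int p ^ Suc b dvd int p ^ n" using b le_imp_power_dvd[of "Suc b" n "int p"] by simp
  have d3: "int p dvd int p ^ n" using n by (simp add: dvd_power)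
  have "[int y = int y'] (mod int p ^ b)"
    using cong_dvd_modulus[OF y1 d1] cong_dvd_modulus[OF y1' d1] cx by (meson cong_sym cong_trans)
  moreover have "[q ^ y = q ^ y'] (mod int p)"
    using cong_dvd_modulus[OF y2 d3] cong_dvd_modulus[OF y2' d3] cz by (meson cong_sym cong_trans)
  ultimately have "[q ^ y = q ^ y'] (mod int p ^ Suc b)"
    using core[OF p q, of y y' b] core[OF p q, of y' y b] by (meson cong_sym nat_le_linear)
  then show ?thesis
    using cong_dvd_modulus[OF y2 d2] cong_dvd_modulus[OF y2' d2] by (meson cong_sym cong_trans)
qed


lemma pred_idx:
  assumes "i < (k::nat)"
  shows "((i + k - 1) mod k + 1) mod k = i" "(i + k - 1) mod k < k"
proof -
  have "((i + k - 1) mod k + 1) mod k = (i + k - 1 + 1) mod k" by (simp add: mod_Suc_eq)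
  also have "i + k - 1 + 1 = i + k" using assms by simp
  finally show "((i + k - 1) mod k + 1) mod k = i" using assms by simp
  show "(i + k - 1) mod k < k" using assms by simp
qed

lemma cyc_pred:
  assumes "\<forall>i<k. gamma_edge p n q (xs ! i) (xs ! ((i + 1) mod k))" "i < k"
  shows "gamma_edge p n q (xs ! ((i + k - 1) mod k)) (xs ! i)"
  using assms(1)[rule_format, OF pred_idx(2)[OF assms(2)]] pred_idx(1)[OF assms(2)] by simp

lemma cyc_elem:
  assumes "\<forall>i<k. gamma_edge p n q (xs ! i) (xs ! ((i + 1) mod k))" "i < k"
  shows "xs ! i \<in> gamma_vertices p n" "\<not> int p dvd xs ! i"
  using edge_target[OF cyc_pred[OF assms]] by auto

lemma cyc_inj:
  assumes c1: "\<forall>i<k. gamma_edge p n q (xs ! i) (xs ! ((i + 1) mod k))" and l1: "length xs = k"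
    and c2: "\<forall>i<k. gamma_edge p n q (xs' ! i) (xs' ! ((i + 1) mod k))" and l2: "length xs' = k"
    and m: "map (\<lambda>x. x mod int p) xs = map (\<lambda>x. x mod int p) xs'"
  shows "xs = xs'"
proof -
  have mp: "[xs ! i = xs' ! i] (mod int p)" if "i < k" for i
  proof -
    have "map (\<lambda>x. x mod int p) xs ! i = map (\<lambda>x. x mod int p) xs' ! i" using m by simp
    then show ?thesis using that l1 l2 by (simp add: cong_def)
  qed
  have "\<forall>i<k. [xs ! i = xs' ! i] (mod int p ^ b)" if "b \<le> n" for b
    using that
  proof (induction b)
    case 0 then show ?case by simp
  next
    case (Suc b)
    show ?case
    proof (intro allI impI)
      fix i assume i: "i < k"
      define j where "j = (i + k - 1) mod k"
      have j: "j < k" using pred_idx(2)[OF i] j_def by simp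
      have "[xs ! j = xs' ! j] (mod int p ^ b)" using Suc j by simp
      then show "[xs ! i = xs' ! i] (mod int p ^ Suc b)"
        using contract[of b "xs ! j" "xs ! i" "xs' ! j" "xs' ! i"] Suc.prems
          cyc_pred[OF c1 i] cyc_pred[OF c2 i] mp[OF i] j_def by simp
    qed
  qed
  then have cn: "\<forall>i<k. [xs ! i = xs' ! i] (mod int p ^ n)" by simp
  show ?thesis
  proof (rule nth_equalityI)
    show "length xs = length xs'" using l1 l2 by simp
    fix i assume "i < length xs"
    then have i: "i < k" using l1 by simp
    have "xs ! i \<in> gamma_vertices p n" "xs' ! i \<in> gamma_vertices p n"
      using cyc_elem[OF c1 i] cyc_elem[OF c2 i] by auto
    then show "xs ! i = xs' ! i" using cn i by (auto simp: cong_def gamma_vertices_def)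
  qed
qed

lemma fermat_q: "[q ^ (p - 1) = 1] (mod int p)"
proof -
  have "q ^ p = q * q ^ (p - 1)" using p prime_gt_0_nat by (cases p) auto
  then have "[q * q ^ (p - 1) = q * 1] (mod int p)" using fermat_int[OF p, of q] by simp
  then show ?thesis using cong_mult_lcancel[OF q] by blast
qed

context
  assumes gen: "\<forall>r\<in>{1..int p - 1}. \<exists>j::nat. [q ^ j = r] (mod int p)"
begin

lemma step_ex:
  assumes x: "x \<in> gamma_vertices p n" and r: "r \<in> {1..int p - 1}"
  shows "\<exists>z. gamma_edge p n q x z \<and> z mod int p = r"
proof -
  obtain j :: nat where j: "[q ^ j = r] (mod int p)" using gen r by blast
  define xn where "xn = nat x"
  have xx: "x = int xn" using x by (simp add: xn_def gamma_vertices_def)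
  define t where "t = j + (p - 2) * xn"
  define y where "y = xn + p ^ n * t"
  have cy: "[int y = x] (mod int p ^ n)" by (simp add: y_def xx cong_def)
  have qy: "q ^ y = q ^ xn * (q ^ (p ^ n)) ^ t" by (simp add: y_def power_add power_mult)
  have "[(q ^ (p ^ n)) ^ t = q ^ t] (mod int p)" using fermat_pow[OF p] by (simp add: cong_pow)
  then have c1: "[q ^ y = q ^ xn * q ^ t] (mod int p)" using qy by (simp add: cong_scalar_left)
  have p2: "p \<ge> 2" using p prime_ge_2_nat by blast
  have "xn + t = j + (p - 1) * xn"
  proof -
    obtain p' where "p = Suc (Suc p')" using p2 by (metis add_2_eq_Suc le_Suc_ex)
    then show ?thesis by (simp add: t_def)
  qed
  then have "q ^ (xn + t) = q ^ (j + (p - 1) * xn)" by simp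
  have "q ^ xn * q ^ t = q ^ (xn + t)" by (simp only: power_add)
  also have "\<dots> = q ^ (j + (p - 1) * xn)" by fact
  also have "\<dots> = q ^ j * (q ^ (p - 1)) ^ xn" by (simp only: power_add power_mult)
  finally have "q ^ xn * q ^ t = q ^ j * (q ^ (p - 1)) ^ xn" .
  moreover have "[q ^ j * (q ^ (p - 1)) ^ xn = r * 1 ^ xn] (mod int p)"
    by (intro cong_mult cong_pow j fermat_q)
  ultimately have c2: "[q ^ y = r] (mod int p)" using c1 by (metis cong_trans power_one mult_1_right)
  define z where "z = q ^ y mod int p ^ n"
  have dv: "int p dvd int p ^ n" using n by (simp add: dvd_power)
  have "z mod int p = q ^ y mod int p" using mod_mod_cancel[OF dv] by (simp add: z_def)
  also have "\<dots> = r mod int p" using c2 by (simp add: cong_def)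
  also have "\<dots> = r" using r by simp
  finally have "z mod int p = r" .
  moreover have "gamma_edge p n q x z" unfolding gamma_edge_def z_def using x cy by blast
  ultimately show ?thesis by blast
qed

lemma exists_cycle:
  assumes k: "k \<ge> 1" and rl: "length r = k" and rs: "set r \<subseteq> {1..int p - 1}"
  shows "\<exists>xs. length xs = k \<and> set xs \<subseteq> gamma_vertices p n \<and>
       (\<forall>i<k. gamma_edge p n q (xs ! i) (xs ! ((i + 1) mod k))) \<and> map (\<lambda>x. x mod int p) xs = r"
proof -
  let ?V = "gamma_vertices p n"
  define phi where "phi c x = (SOME z. gamma_edge p n q x z \<and> z mod int p = c)" for c x
  have phi: "gamma_edge p n q x (phi c x) \<and> phi c x mod int p = c"
    if "x \<in> ?V" "c \<in> {1..int p - 1}" for x c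
    unfolding phi_def by (rule someI_ex) (rule step_ex[OF that])
  define ph where "ph = (\<lambda>i x. phi (r ! (i mod k)) x)"
  have phE: "ph i y = phi (r ! (i mod k)) y" for i y by (simp add: ph_def)
  have rin: "r ! (i mod k) \<in> {1..int p - 1}" for i
    using rs rl k by (metis in_mono nth_mem mod_less_divisor less_le_trans zero_less_one)
  have W1: "walk ph x i \<in> ?V" if "x \<in> ?V" for x i
    using that
  proof (induction i)
    case 0 then show ?case by simp
  next
    case (Suc i)
    have "gamma_edge p n q (walk ph x i) (ph (Suc i) (walk ph x i))"
      using phi[OF Suc.IH[OF Suc.prems] rin[of "Suc i"]] by (simp add: ph_def)
    then show ?case using edge_target(1) by simp
  qed
  have W2: "gamma_edge p n q (walk ph x i) (walk ph x (Suc i)) \<and> walk ph x (Suc i) mod int p = r ! (Suc i mod k)"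
    if "x \<in> ?V" for x i
    using phi[OF W1[OF that] rin[of "Suc i"]] by (simp add: ph_def)
  have W3: "[walk ph x i = walk ph x' i] (mod int p ^ b)"
    if "x \<in> ?V" "x' \<in> ?V" "b < n" "[x = x'] (mod int p ^ b)" for x x' i b
  proof (induction i)
    case 0 then show ?case using that by simp
  next
    case (Suc i)
    have "[walk ph x (Suc i) = walk ph x' (Suc i)] (mod int p ^ Suc b)"
      using contract[OF that(3) conjunct1[OF W2[OF that(1)]] conjunct1[OF W2[OF that(2)]] _ Suc.IH]
        W2[OF that(1), of i] W2[OF that(2), of i] by (simp add: cong_def)
    then show ?case by (rule cong_dvd_modulus) (simp add: le_imp_power_dvd)
  qed
  have W4: "[walk ph x (Suc i) = walk ph x' (Suc i)] (mod int p ^ Suc b)"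
    if "x \<in> ?V" "x' \<in> ?V" "b < n" "[x = x'] (mod int p ^ b)" for x x' i b
    using contract[OF that(3) conjunct1[OF W2[OF that(1)]] conjunct1[OF W2[OF that(2)]] _ W3[OF that]]
        W2[OF that(1), of i] W2[OF that(2), of i] by (simp add: cong_def)
  define F where "F x = walk ph x k" for x
  obtain k' where k': "k = Suc k'" using k by (metis Suc_pred' less_le_trans zero_less_one)
  have FV: "(F ^^ b) x \<in> ?V" if "x \<in> ?V" for x b
    by (induction b) (auto simp: F_def that W1)
  have FC: "\<forall>x\<in>?V. \<forall>x'\<in>?V. [(F ^^ b) x = (F ^^ b) x'] (mod int p ^ b)" if "b \<le> n" for b
    using that
  proof (induction b)
    case 0 then show ?case by simp
  next
    case (Suc b)
    show ?case
    proof (intro ballI)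
      fix x x' assume xv: "x \<in> ?V" "x' \<in> ?V"
      have xb: "(F ^^ b) x \<in> ?V" "(F ^^ b) x' \<in> ?V" using FV xv by auto
      have bn: "b < n" using Suc.prems by simp
      have "[(F ^^ b) x = (F ^^ b) x'] (mod int p ^ b)" using Suc xv by simp
      from W4[OF xb bn this, of k']
      have "[walk ph ((F ^^ b) x) (Suc k') = walk ph ((F ^^ b) x') (Suc k')] (mod int p ^ Suc b)" .
      moreover have "(F ^^ Suc b) y = walk ph ((F ^^ b) y) (Suc k')" for y
        by (simp add: F_def k')
      ultimately show "[(F ^^ Suc b) x = (F ^^ Suc b) x'] (mod int p ^ Suc b)" by simp
    qed
  qed
  have V0: "0 \<in> ?V" using pn_pos by (simp add: gamma_vertices_def)
  define c where "c = (F ^^ n) 0"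
  have cV: "c \<in> ?V" using FV[OF V0] c_def by simp
  have "F c = (F ^^ n) (F 0)" by (simp add: c_def funpow_swap1)
  moreover have "F 0 \<in> ?V" using FV[OF V0, of 1] by simp
  ultimately have "[F c = c] (mod int p ^ n)" using FC[of n] V0 c_def by simp
  moreover have "F c \<in> ?V" using FV[OF cV, of 1] by simp
  ultimately have Fc: "F c = c" using cV by (auto simp: cong_def gamma_vertices_def)
  define xs where "xs = map (walk ph c) [0..<k]"
  have "length xs = k" by (simp add: xs_def)
  moreover have "set xs \<subseteq> ?V" using W1[OF cV] by (auto simp: xs_def)
  moreover have "gamma_edge p n q (xs ! i) (xs ! ((i + 1) mod k))" if i: "i < k" for i
  proof (cases "Suc i < k")
    case True
    then show ?thesis using W2[OF cV, of i] i by (simp add: xs_def)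
  next
    case False
    then have "Suc i = k" using i by simp
    moreover have "walk ph c k = c" using Fc by (simp add: F_def)
    ultimately show ?thesis using W2[OF cV, of i] i k by (simp add: xs_def)
  qed
  moreover have "map (\<lambda>x. x mod int p) xs = r"
  proof (rule nth_equalityI)
    show "length (map (\<lambda>x. x mod int p) xs) = length r" using rl by (simp add: xs_def)
    fix i assume "i < length (map (\<lambda>x. x mod int p) xs)"
    then have i: "i < k" by (simp add: xs_def)
    show "map (\<lambda>x. x mod int p) xs ! i = r ! i"
    proof (cases i)
      case 0
      have "walk ph c k = c" using Fc by (simp add: F_def)
      have "map (\<lambda>x. x mod int p) xs ! i = c mod int p" using i 0 by (simp add: xs_def)
      then show ?thesis using W2[OF cV, of k'] \<open>walk ph c k = c\<close> 0 by (simp add: k')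
    next
      case (Suc i')
      then show ?thesis using W2[OF cV, of i'] i by (simp add: xs_def)
    qed
  qed
  ultimately show ?thesis by blast
qed

end


lemma main_ctx:
  assumes k: "k \<ge> 1"
  shows "gamma_cycles p n q k \<le> (p - 1) ^ k \<and>
    ((\<forall>r\<in>{1..int p - 1}. \<exists>j::nat. [q ^ j = r] (mod int p)) \<longrightarrow> gamma_cycles p n q k = (p - 1) ^ k)"
proof -
  let ?S = "{xs :: int list. length xs = k \<and> set xs \<subseteq> gamma_vertices p n \<and>
       (\<forall>i<k. gamma_edge p n q (xs ! i) (xs ! ((i + 1) mod k)))}"
  let ?L = "{xs. set xs \<subseteq> {1..int p - 1} \<and> length xs = k}"
  let ?f = "map (\<lambda>x. x mod int p)"
  have inj: "inj_on ?f ?S" by (rule inj_onI) (use cyc_inj in blast)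
  have img: "?f ` ?S \<subseteq> ?L"
  proof
    fix ys assume "ys \<in> ?f ` ?S"
    then obtain xs where xs: "xs \<in> ?S" and ys: "ys = ?f xs" by blast
    have "y \<in> {1..int p - 1}" if "y \<in> set ys" for y
    proof -
      have "\<exists>i<length xs. y = xs ! i mod int p" using that ys by (auto simp: in_set_conv_nth)
      then obtain i where i: "i < k" "y = xs ! i mod int p" using xs by auto
      have "\<not> int p dvd xs ! i" using cyc_elem[OF _ i(1)] xs by blast
      then have "y \<noteq> 0" using i by (simp add: dvd_eq_mod_eq_0)
      moreover have "0 \<le> y" "y < int p" using i p prime_gt_0_nat by auto
      ultimately show ?thesis by simp
    qed
    then show "ys \<in> ?L" using ys xs by auto
  qed
  have fin: "finite ?L" by (rule finite_lists_length_eq) simp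
  have "nat (int p - 1) = p - 1" by arith
  then have cardL: "card ?L = (p - 1) ^ k" by (simp add: card_lists_length_eq)
  have "card ?S \<le> card ?L" using inj img fin by (rule card_inj_on_le)
  then have up: "gamma_cycles p n q k \<le> (p - 1) ^ k" unfolding gamma_cycles_def using cardL by simp
  have eq: "gamma_cycles p n q k = (p - 1) ^ k"
    if g: "\<forall>r\<in>{1..int p - 1}. \<exists>j::nat. [q ^ j = r] (mod int p)"
  proof -
    have "?L \<subseteq> ?f ` ?S"
    proof
      fix r assume "r \<in> ?L"
      then have "length r = k" "set r \<subseteq> {1..int p - 1}" by auto
      from exists_cycle[OF g k this] show "r \<in> ?f ` ?S" by force
    qed
    with img have "?f ` ?S = ?L" by blast
    then have "card ?S = card ?L" using card_image[OF inj] by simp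
    then show ?thesis unfolding gamma_cycles_def using cardL by simp
  qed
  show ?thesis using up eq by blast
qed

end


lemma primroot_gen:
  assumes p: "prime p" and pr: "residue_primroot p (nat (q mod int p))"
  shows "\<forall>r\<in>{1..int p - 1}. \<exists>j::nat. [q ^ j = r] (mod int p)"
proof
  fix r :: int assume r: "r \<in> {1..int p - 1}"
  define g where "g = nat (q mod int p)"
  have p1: "p > 1" using p prime_gt_1_nat by blast
  have bij: "bij_betw (\<lambda>i. g ^ i mod p) {..<totient p} (totatives p)"
    using residue_primroot_is_generator[OF p1] pr g_def by simp
  have "\<not> p dvd nat r" using r by (auto dest: dvd_imp_le)
  then have "coprime p (nat r)" using p by (simp add: prime_imp_coprime)
  then have "nat r \<in> totatives p" using r by (auto simp: totatives_def coprime_commute)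
  then obtain i where i: "g ^ i mod p = nat r" using bij unfolding bij_betw_def by force
  have gq: "int g = q mod int p" using p1 by (simp add: g_def)
  have "[q = int g] (mod int p)" using gq by (simp add: cong_def)
  then have "[q ^ i = int g ^ i] (mod int p)" by (rule cong_pow)
  moreover have "int g ^ i mod int p = r"
  proof -
    have "int g ^ i mod int p = int (g ^ i mod p)" by (simp add: of_nat_mod)
    also have "\<dots> = r" using i r by simp
    finally show ?thesis .
  qed
  ultimately have "q ^ i mod int p = r mod int p" using r by (simp add: cong_def)
  then show "\<exists>j::nat. [q ^ j = r] (mod int p)" by (auto simp: cong_def)
qed

theorem theorem1:
  fixes p n k :: nat and q :: int
  assumes "prime p" and "n \<ge> 1" and "k \<ge> 1" and "gcd q (int p) = 1"
  shows "gamma_cycles p n q k \<le> (p - 1) ^ k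
         \<and> (residue_primroot p (nat (q mod int p)) \<longrightarrow> gamma_cycles p n q k = (p - 1) ^ k)"
proof -
  have q: "coprime q (int p)" using assms(4) by (simp add: coprime_iff_gcd_eq_1)
  note m = main_ctx[OF assms(1,2) q assms(3)]
  show ?thesis using m primroot_gen[OF assms(1)] by blast
qed

end
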